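(* Let $I\subset\mathbb R$ be an open interval, $f:I\to\mathbb R$ continuously differentiable, and $p^*\in I$ with $f(p^* )=0$ and $f'(p^* )\ne0$. Let $\eta\in(0,1)$ and $\zeta\in(\eta,1)$. Then there exists $\epsilon>0$ with the following property. Let $(p_n)_{n\ge0}$, $(F_n)_{n\ge0}$, $(F'_n)_{n\ge0}$ be real sequences with $F'_n\ne0$, $p_{n+1}=p_n-F_n/F'_n$ for all $n$, $|p_0-p^*|\le\epsilon$, and such that for every $n$ with $p_n\in I$, $$2|F_n-f(p_n)|+|\Delta p_n|\,|F'_n-f'(p_n)|\le\eta|F_n|,\qquad \Delta p_n:=p_{n+1}-p_n.$$ Then $|p_n-p^*|\le\epsilon$ and $|p_{n+1}-p^*|\le\zeta|p_n-p^*|$ for all $n\ge0$; in particular $p_n\to p^*$. *)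

theory Defs
  imports "HOL-Analysis.Analysis"
begin

end

theory Submission
  imports Defs
begin
lemma step_alg:
  fixes p q ps F F' y D E c \<delta> \<eta> \<zeta> :: real
  assumes y: "y = E * (p - ps)" and DE: "\<bar>D - E\<bar> \<le> 2*\<delta>" and Eb: "\<bar>E\<bar> \<le> c + \<delta>"
    and Db: "c - \<delta> \<le> \<bar>D\<bar>" and cd: "0 < c - \<delta>" and F': "F' \<noteq> 0"
    and q: "q = p - F / F'"
    and cond: "2 * \<bar>F - y\<bar> + \<bar>q - p\<bar> * \<bar>F' - D\<bar> \<le> \<eta> * \<bar>F\<bar>"
    and par: "2*\<delta> + \<eta>*(c+\<delta>) \<le> \<zeta>*(c-\<delta>)" and eta: "0 < \<eta>" "\<eta> < 1" and zpos: "0 \<le> \<zeta>"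
  shows "\<bar>q - ps\<bar> \<le> \<zeta> * \<bar>p - ps\<bar>"
proof -
  define a where "a = F - y"
  define b where "b = F' - D"
  define d where "d = q - p"
  define e where "e = p - ps"
  have Fd: "F' * d = - F" using q F' unfolding d_def by (simp add: field_simps)
  have "\<bar>F\<bar> \<le> \<bar>y\<bar> + \<bar>a\<bar>" unfolding a_def by linarith
  hence "\<eta> * \<bar>F\<bar> \<le> \<eta> * \<bar>y\<bar> + \<eta> * \<bar>a\<bar>" using eta by (metis distrib_left less_eq_real_def mult_left_mono)
  moreover have "\<bar>d\<bar> * \<bar>b\<bar> = \<bar>b*d\<bar>" by (simp add: abs_mult)
  moreover have "\<eta> * \<bar>a\<bar> \<le> \<bar>a\<bar>" using eta by (simp add: mult_left_le_one_le)
  ultimately have ab: "\<bar>a\<bar> + \<bar>b*d\<bar> \<le> \<eta> * \<bar>y\<bar>"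
    using cond eta unfolding a_def b_def d_def by linarith
  have key: "D * (q - ps) = (D - E) * e - (a + b*d)"
  proof -
    have "D * d = - y - a - b*d" using Fd unfolding a_def b_def by (simp add: algebra_simps)
    moreover have "q - ps = e + d" unfolding e_def d_def by simp
    ultimately show ?thesis using y unfolding e_def by (simp add: algebra_simps)
  qed
  have "\<bar>D\<bar> * \<bar>q - ps\<bar> \<le> \<bar>D - E\<bar> * \<bar>e\<bar> + \<eta> * \<bar>y\<bar>"
  proof -
    have "\<bar>D\<bar> * \<bar>q - ps\<bar> = \<bar>(D - E) * e - (a + b*d)\<bar>" using key by (metis abs_mult)
    also have "\<dots> \<le> \<bar>(D - E) * e\<bar> + \<bar>a\<bar> + \<bar>b*d\<bar>" by (simp add: abs_triangle_ineq4 abs_triangle_ineq order_trans)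
    finally show ?thesis using ab by (simp add: abs_mult)
  qed
  also have "\<dots> \<le> 2*\<delta>*\<bar>e\<bar> + \<eta>*((c+\<delta>)*\<bar>e\<bar>)"
    using DE Eb eta unfolding y e_def
    by (intro add_mono mult_right_mono mult_left_mono) (auto simp: abs_mult mult_right_mono)
  also have "\<dots> = (2*\<delta> + \<eta>*(c+\<delta>)) * \<bar>e\<bar>" by (simp add: algebra_simps)
  also have "\<dots> \<le> \<zeta>*(c-\<delta>) * \<bar>e\<bar>" using par by (simp add: mult_right_mono)
  also have "\<dots> \<le> \<zeta>*\<bar>D\<bar>*\<bar>e\<bar>"
  proof -
    show ?thesis using zpos using Db by (intro mult_right_mono mult_left_mono) auto
  qed
  finally have "\<bar>D\<bar> * \<bar>q - ps\<bar> \<le> \<bar>D\<bar> * (\<zeta> * \<bar>e\<bar>)" by (simp add: algebra_simps)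
  moreover have "\<bar>D\<bar> > 0" using Db cd by linarith
  ultimately show ?thesis unfolding e_def by (simp add: mult_le_cancel_left_pos)
qed
theorem lemma4:
  fixes I :: "real set" and f f' :: "real \<Rightarrow> real" and pstar \<eta> \<zeta> :: real
  assumes "open I" and "is_interval I"
    and "\<And>x. x \<in> I \<Longrightarrow> (f has_real_derivative f' x) (at x)"
    and "continuous_on I f'"
    and "pstar \<in> I" and "f pstar = 0" and "f' pstar \<noteq> 0"
    and "0 < \<eta>" and "\<eta> < 1" and "\<eta> < \<zeta>" and "\<zeta> < 1"
  shows "\<exists>\<epsilon>>0. \<forall>(p :: nat \<Rightarrow> real) (F :: nat \<Rightarrow> real) (F' :: nat \<Rightarrow> real).
           (\<forall>n. F' n \<noteq> 0) \<and>
           (\<forall>n. p (Suc n) = p n - F n / F' n) \<and>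
           \<bar>p 0 - pstar\<bar> \<le> \<epsilon> \<and>
           (\<forall>n. p n \<in> I \<longrightarrow>
              2 * \<bar>F n - f (p n)\<bar> + \<bar>p (Suc n) - p n\<bar> * \<bar>F' n - f' (p n)\<bar> \<le> \<eta> * \<bar>F n\<bar>)
           \<longrightarrow> (\<forall>n. \<bar>p n - pstar\<bar> \<le> \<epsilon> \<and> \<bar>p (Suc n) - pstar\<bar> \<le> \<zeta> * \<bar>p n - pstar\<bar>)
               \<and> p \<longlonglongrightarrow> pstar"
proof -
  note A = assms
  define c where "c = \<bar>f' pstar\<bar>"
  have c0: "c > 0" using A(7) unfolding c_def by simp
  define \<delta> where "\<delta> = (\<zeta>-\<eta>)*c/(2+\<eta>+\<zeta>)"
  have d0: "\<delta> > 0" unfolding \<delta>_def using A c0 by simp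
  have dc: "\<delta> < c"
  proof -
    have "(\<zeta>-\<eta>)*c < (2+\<eta>+\<zeta>)*c" using A c0 by (intro mult_strict_right_mono) auto
    thus ?thesis unfolding \<delta>_def using A by (simp add: divide_less_eq mult.commute)
  qed
  have par: "2*\<delta> + \<eta>*(c+\<delta>) \<le> \<zeta>*(c-\<delta>)"
  proof -
    have "\<delta>*(2+\<eta>+\<zeta>) = (\<zeta>-\<eta>)*c" unfolding \<delta>_def using A by simp
    thus ?thesis by (simp add: algebra_simps)
  qed
  obtain d where d: "d > 0" "\<And>x'. x' \<in> I \<Longrightarrow> dist x' pstar < d \<Longrightarrow> dist (f' x') (f' pstar) < \<delta>"
    using A(4) A(5) d0 unfolding continuous_on_iff by metis
  obtain r where r: "r > 0" "ball pstar r \<subseteq> I" using A(1) A(5) open_contains_ball by blast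
  define \<epsilon> where "\<epsilon> = min d r / 2"
  have e0: "\<epsilon> > 0" unfolding \<epsilon>_def using d r by simp
  have close: "x \<in> I \<and> \<bar>f' x - f' pstar\<bar> < \<delta>" if "\<bar>x - pstar\<bar> \<le> \<epsilon>" for x
  proof -
    have "\<bar>x - pstar\<bar> < r" using that r d unfolding \<epsilon>_def by linarith
    hence "x \<in> ball pstar r" by (simp add: dist_real_def abs_minus_commute)
    hence xI: "x \<in> I" using r by blast
    have "\<bar>x - pstar\<bar> < d" using that r d unfolding \<epsilon>_def by linarith
    hence "dist x pstar < d" by (simp add: dist_real_def)
    thus ?thesis using d(2)[OF xI] xI by (simp add: dist_real_def)
  qed
  have mvt: "\<exists>E. f x = E*(x-pstar) \<and> \<bar>E - f' pstar\<bar> < \<delta>" if "\<bar>x - pstar\<bar> \<le> \<epsilon>" for x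
  proof (cases "x = pstar")
    case True thus ?thesis using A(6) d0 by (intro exI[of _ "f' pstar"]) auto
  next
    case False
    show ?thesis
    proof (cases "pstar < x")
      case True
      have "\<exists>z. pstar < z \<and> z < x \<and> f x - f pstar = (x - pstar) * f' z"
        by (rule MVT2[OF True]) (use that close A(3) in auto)
      then obtain z where z: "pstar < z" "z < x" "f x - f pstar = (x - pstar) * f' z" by blast
      have "\<bar>z - pstar\<bar> \<le> \<epsilon>" using z that by auto
      hence "\<bar>f' z - f' pstar\<bar> < \<delta>" using close by blast
      thus ?thesis using z A(6) by (intro exI[of _ "f' z"]) (simp add: algebra_simps)
    next
      case F2: False
      hence lt: "x < pstar" using False by simp
      have "\<exists>z. x < z \<and> z < pstar \<and> f pstar - f x = (pstar - x) * f' z"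
        by (rule MVT2[OF lt]) (use that close A(3) in auto)
      then obtain z where z: "x < z" "z < pstar" "f pstar - f x = (pstar - x) * f' z" by blast
      have "\<bar>z - pstar\<bar> \<le> \<epsilon>" using z that by auto
      hence "\<bar>f' z - f' pstar\<bar> < \<delta>" using close by blast
      thus ?thesis using z A(6) by (intro exI[of _ "f' z"]) (simp add: algebra_simps)
    qed
  qed
  show ?thesis
  proof (rule exI[of _ \<epsilon>], rule conjI[OF e0], intro allI impI)
    fix p F F' :: "nat \<Rightarrow> real"
    assume H: "(\<forall>n. F' n \<noteq> 0) \<and>
           (\<forall>n. p (Suc n) = p n - F n / F' n) \<and>
           \<bar>p 0 - pstar\<bar> \<le> \<epsilon> \<and>
           (\<forall>n. p n \<in> I \<longrightarrow>
              2 * \<bar>F n - f (p n)\<bar> + \<bar>p (Suc n) - p n\<bar> * \<bar>F' n - f' (p n)\<bar> \<le> \<eta> * \<bar>F n\<bar>)"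
    have onestep: "\<bar>p (Suc n) - pstar\<bar> \<le> \<zeta> * \<bar>p n - pstar\<bar>" if pn: "\<bar>p n - pstar\<bar> \<le> \<epsilon>" for n
    proof -
      obtain E where E: "f (p n) = E*(p n-pstar)" "\<bar>E - f' pstar\<bar> < \<delta>" using mvt[OF pn] by blast
      have cl: "p n \<in> I" "\<bar>f' (p n) - f' pstar\<bar> < \<delta>" using close[OF pn] by auto
      show ?thesis
      proof (rule step_alg[where y="f (p n)" and E=E and D="f' (p n)" and c=c and \<delta>=\<delta> and F="F n" and F'="F' n" and \<eta>=\<eta>])
        show "\<bar>f' (p n) - E\<bar> \<le> 2 * \<delta>" using E cl by linarith
        show "\<bar>E\<bar> \<le> c + \<delta>" using E unfolding c_def by linarith
        show "c - \<delta> \<le> \<bar>f' (p n)\<bar>" using cl unfolding c_def by linarith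
      qed (use E H cl par A dc in auto)
    qed
    have bnd: "\<bar>p n - pstar\<bar> \<le> \<zeta>^n * \<epsilon>" for n
    proof (induction n)
      case 0 thus ?case using H by simp
    next
      case (Suc n)
      have "\<zeta>^n * \<epsilon> \<le> \<epsilon>" using A e0 by (simp add: power_le_one mult_left_le_one_le)
      hence "\<bar>p (Suc n) - pstar\<bar> \<le> \<zeta> * \<bar>p n - pstar\<bar>" using Suc by (intro onestep) linarith
      also have "\<dots> \<le> \<zeta> * (\<zeta>^n * \<epsilon>)" using Suc A by (intro mult_left_mono) auto
      finally show ?case by simp
    qed
    have le: "\<bar>p n - pstar\<bar> \<le> \<epsilon>" for n
    proof -
      have "\<zeta>^n * \<epsilon> \<le> \<epsilon>" using A e0 by (simp add: power_le_one mult_left_le_one_le)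
      thus ?thesis using bnd[of n] by linarith
    qed
    have G1: "\<forall>n. \<bar>p n - pstar\<bar> \<le> \<epsilon> \<and> \<bar>p (Suc n) - pstar\<bar> \<le> \<zeta> * \<bar>p n - pstar\<bar>"
      using le onestep by blast
    have "(\<lambda>n. \<zeta>^n * \<epsilon>) \<longlonglongrightarrow> 0"
      using A by (intro tendsto_mult_left_zero LIMSEQ_power_zero) auto
    hence "(\<lambda>n. p n - pstar) \<longlonglongrightarrow> 0"
      by (rule Lim_null_comparison[rotated]) (use bnd in auto)
    hence "p \<longlonglongrightarrow> pstar" by (simp add: LIM_zero_cancel)
    thus "(\<forall>n. \<bar>p n - pstar\<bar> \<le> \<epsilon> \<and> \<bar>p (Suc n) - pstar\<bar> \<le> \<zeta> * \<bar>p n - pstar\<bar>) \<and> p \<longlonglongrightarrow> pstar"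
      using G1 by blast
  qed
qed

end
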